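(* In every complete lattice $\mathbf L$, the set $\Gamma$ of all non-generators is closed under binary meets and binary joins: if $a,b\in\Gamma$ then $a\wedge b\in\Gamma$ and $a\vee b\in\Gamma$.
   Context: A complete sublattice of a complete lattice $\mathbf L$ is a subset closed under arbitrary meets and joins computed in $L$ (including those of the empty set). For $X\subseteq L$, $\langle X\rangle$ is the intersection of all complete sublattices containing $X$, and $\langle X,a\rangle=\langle X\cup\{a\}\rangle$. An element $a$ is a non-generator if for every $X\subseteq L$, $\langle X,a\rangle=L$ implies $\langle X\rangle=L$. *)

theory Defs
  imports Main
begin

text \<open>Complete sublattices of a complete lattice (the whole type 'a):
  subsets closed under arbitrary meets and joins, including those of the empty set.\<close>
definition complete_sublattice :: "'a::complete_lattice set \<Rightarrow> bool" where
  "complete_sublattice S \<longleftrightarrow> (\<forall>A. A \<subseteq> S \<longrightarrow> Inf A \<in> S \<and> Sup A \<in> S)"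

definition gen :: "'a::complete_lattice set \<Rightarrow> 'a set" where
  "gen X = \<Inter> {S. complete_sublattice S \<and> X \<subseteq> S}"

definition non_generator :: "'a::complete_lattice \<Rightarrow> bool" where
  "non_generator a \<longleftrightarrow> (\<forall>X. gen (insert a X) = UNIV \<longrightarrow> gen X = UNIV)"

end

theory Submission
  imports Defs
begin

lemma gen_csl: "complete_sublattice (gen X)"
  unfolding complete_sublattice_def
proof (intro allI impI conjI)
  fix A assume A: "A \<subseteq> gen X"
  have "\<And>S. complete_sublattice S \<Longrightarrow> X \<subseteq> S \<Longrightarrow> A \<subseteq> S"
    using A unfolding gen_def by auto
  then show "Inf A \<in> gen X" "Sup A \<in> gen X"
    unfolding gen_def complete_sublattice_def by auto
qed

lemma gen_sub: "X \<subseteq> gen X"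
  unfolding gen_def by (rule Inter_greatest) simp

lemma gen_least: "complete_sublattice S \<Longrightarrow> X \<subseteq> S \<Longrightarrow> gen X \<subseteq> S"
  unfolding gen_def by (rule Inter_lower) simp

lemma key:
  fixes a b c :: "'a::complete_lattice"
  assumes na: "non_generator a" and nb: "non_generator b"
    and c: "\<And>S. complete_sublattice S \<Longrightarrow> a \<in> S \<Longrightarrow> b \<in> S \<Longrightarrow> c \<in> S"
  shows "non_generator c"
  unfolding non_generator_def
proof (intro allI impI)
  fix X :: "'a set"
  assume h: "gen (insert c X) = UNIV"
  let ?G = "gen (insert a (insert b X))"
  have sub: "insert a (insert b X) \<subseteq> ?G" by (rule gen_sub)
  have "c \<in> ?G" using c[OF gen_csl] sub by simp
  hence "insert c X \<subseteq> ?G" using sub by simp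
  hence "gen (insert c X) \<subseteq> ?G" by (rule gen_least[OF gen_csl])
  hence "?G = UNIV" using h by (simp add: top_le[unfolded top_set_def])
  hence "gen (insert b X) = UNIV" using na unfolding non_generator_def by simp
  thus "gen X = UNIV" using nb unfolding non_generator_def by simp
qed

theorem mainTheorem5:
  fixes a b :: "'a::complete_lattice"
  assumes "non_generator a" and "non_generator b"
  shows "non_generator (inf a b) \<and> non_generator (sup a b)"
proof
  show "non_generator (inf a b)"
  proof (rule key[OF assms])
    fix S :: "'a set" assume "complete_sublattice S" "a \<in> S" "b \<in> S"
    hence "Inf {a, b} \<in> S" unfolding complete_sublattice_def by (meson empty_subsetI insert_subset)
    thus "inf a b \<in> S" by simp
  qed
  show "non_generator (sup a b)"
  proof (rule key[OF assms])
    fix S :: "'a set" assume "complete_sublattice S" "a \<in> S" "b \<in> S"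
    hence "Sup {a, b} \<in> S" unfolding complete_sublattice_def by (meson empty_subsetI insert_subset)
    thus "sup a b \<in> S" by simp
  qed
qed

end
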